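(* Every scoring method $f:\mathcal{R}^n\to\mathbb{R}^n$ satisfying neutrality, symmetry and strong order preservation satisfies independence of irrelevant matches.
   Context: Let $N=\{X_1,\dots,X_n\}$. A ranking problem is a pair $(N,A)$ where $A=[a_{ij}]$ is a real $n\times n$ matrix with $a_{ii}=0$, $a_{ij}\ge0$ and $a_{ij}+a_{ji}$ a nonnegative integer for all $i\ne j$. Its results matrix is $R=A-A^\top$ and matches matrix $M=A+A^\top$; the problem is equivalently written $(N,R,M)$, and the sum of $(N,A)$ and $(N,A')$ is $(N,A+A')$. $\mathcal{R}^n$ is the set of ranking problems on $N$; a scoring method is a function $f:\mathcal{R}^n\to\mathbb{R}^n$. Neutrality: for a permutation $\sigma$ of $\{1,\dots,n\}$ let $\sigma(N,A)=(N,A^\sigma)$ with $a^\sigma_{\sigma(i)\sigma(j)}=a_{ij}$; $f$ is neutral if $f_{\sigma(i)}(\sigma(N,A))=f_i(N,A)$ for all $\sigma$, all problems and all $i$. Symmetry: if $R=O$ (zero matrix) then $f_i(N,R,M)=f_j(N,R,M)$ for all $X_i,X_j$. Strong order preservation: for all $(N,A),(N,A')\in\mathcal{R}^n$ and all $X_i,X_j$, if $f_i(N,A)\ge f_j(N,A)$ and $f_i(N,A')\ge f_j(N,A')$, then $f_i(N,A+A')\ge f_j(N,A+A')$, strictly if $f_i(N,A)>f_j(N,A)$ or $f_i(N,A')>f_j(N,A')$. Independence of irrelevant matches: for all $(N,A),(N,A')\in\mathcal{R}^n$ and all four pairwise different players $X_i,X_j,X_k,X_\ell$ such that $A$ and $A'$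 agree in every entry except possibly the entries $(k,\ell)$ and $(\ell,k)$, $f_i(N,A)\ge f_j(N,A)$ implies $f_i(N,A')\ge f_j(N,A')$. *)

theory Defs
  imports Complex_Main
begin

text \<open>Players are the elements of a finite type 'n (so n = CARD('n)).
  A matrix A is a function 'n => 'n => real; a scoring method is a function
  from matrices to score vectors 'n => real, only evaluated on ranking problems.\<close>

type_synonym 'n rmatrix = "'n \<Rightarrow> 'n \<Rightarrow> real"

definition ranking_problem :: "'n rmatrix \<Rightarrow> bool" where
  "ranking_problem A \<longleftrightarrow>
     (\<forall>i. A i i = 0) \<and>
     (\<forall>i j. i \<noteq> j \<longrightarrow> A i j \<ge> 0 \<and> A i j + A j i \<in> \<nat>)"

definition results_matrix :: "'n rmatrix \<Rightarrow> 'n rmatrix" where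
  "results_matrix A = (\<lambda>i j. A i j - A j i)"

definition matches_matrix :: "'n rmatrix \<Rightarrow> 'n rmatrix" where
  "matches_matrix A = (\<lambda>i j. A i j + A j i)"

definition rp_sum :: "'n rmatrix \<Rightarrow> 'n rmatrix \<Rightarrow> 'n rmatrix" where
  "rp_sum A A' = (\<lambda>i j. A i j + A' i j)"

text \<open>sigma(N,A) = (N, A^sigma) with A^sigma (sigma i) (sigma j) = A i j.\<close>
definition permute_rp :: "('n \<Rightarrow> 'n) \<Rightarrow> 'n rmatrix \<Rightarrow> 'n rmatrix" where
  "permute_rp \<sigma> A = (\<lambda>x y. A (inv \<sigma> x) (inv \<sigma> y))"

definition neutral :: "('n rmatrix \<Rightarrow> 'n \<Rightarrow> real) \<Rightarrow> bool" where
  "neutral f \<longleftrightarrow> (\<forall>\<sigma> A i. bij \<sigma> \<longrightarrow> ranking_problem A \<longrightarrow>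
      f (permute_rp \<sigma> A) (\<sigma> i) = f A i)"

definition symmetric_method :: "('n rmatrix \<Rightarrow> 'n \<Rightarrow> real) \<Rightarrow> bool" where
  "symmetric_method f \<longleftrightarrow> (\<forall>A. ranking_problem A \<longrightarrow>
      results_matrix A = (\<lambda>i j. 0) \<longrightarrow> (\<forall>i j. f A i = f A j))"

definition strong_order_preservation :: "('n rmatrix \<Rightarrow> 'n \<Rightarrow> real) \<Rightarrow> bool" where
  "strong_order_preservation f \<longleftrightarrow> (\<forall>A A' i j.
      ranking_problem A \<longrightarrow> ranking_problem A' \<longrightarrow>
      f A i \<ge> f A j \<longrightarrow> f A' i \<ge> f A' j \<longrightarrow>
      f (rp_sum A A') i \<ge> f (rp_sum A A') j \<and>
      ((f A i > f A j \<or> f A' i > f A' j) \<longrightarrow> f (rp_sum A A') i > f (rp_sum A A') j))"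

definition indep_irrelevant_matches :: "('n rmatrix \<Rightarrow> 'n \<Rightarrow> real) \<Rightarrow> bool" where
  "indep_irrelevant_matches f \<longleftrightarrow> (\<forall>A A' i j k l.
      ranking_problem A \<longrightarrow> ranking_problem A' \<longrightarrow>
      distinct [i, j, k, l] \<longrightarrow>
      (\<forall>x y. (x, y) \<noteq> (k, l) \<and> (x, y) \<noteq> (l, k) \<longrightarrow> A x y = A' x y) \<longrightarrow>
      f A i \<ge> f A j \<longrightarrow> f A' i \<ge> f A' j)"

end

theory Submission
  imports Defs
begin

lemma kl_part_rp:
  assumes "ranking_problem A"
  shows "ranking_problem (\<lambda>x y. if (x = k \<and> y = l) \<or> (x = l \<and> y = k) then A x y else 0)"
  using assms unfolding ranking_problem_def by auto

lemma rest_rp: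
  assumes "ranking_problem A"
  shows "ranking_problem (\<lambda>x y. if (x = k \<and> y = l) \<or> (x = l \<and> y = k) then 0 else A x y)"
  using assms unfolding ranking_problem_def by auto

lemma swap_invariant:
  fixes f :: "('n::finite) rmatrix \<Rightarrow> 'n \<Rightarrow> real"
  assumes "neutral f" "ranking_problem A" "distinct [i, j, k, l]"
    and "A = (\<lambda>x y. if (x = k \<and> y = l) \<or> (x = l \<and> y = k) then B x y else 0)"
  shows "f A i = f A j"
proof -
  define \<sigma> where "\<sigma> = (\<lambda>x. if x = i then j else if x = j then i else x)"
  have ss: "\<sigma> \<circ> \<sigma> = id" using assms(3) by (auto simp: \<sigma>_def fun_eq_iff)
  have b: "bij \<sigma>" using ss by (metis o_bij)
  have inv: "inv \<sigma> = \<sigma>" using ss by (metis inv_unique_comp)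
  have "permute_rp \<sigma> A = A"
    unfolding permute_rp_def inv assms(4) using assms(3) by (auto simp: \<sigma>_def fun_eq_iff)
  moreover have "\<sigma> i = j" by (simp add: \<sigma>_def)
  ultimately show ?thesis using assms(1,2) b unfolding neutral_def by metis
qed

theorem proposition4p1:
  fixes f :: "('n::finite) rmatrix \<Rightarrow> 'n \<Rightarrow> real"
  assumes "neutral f"
    and "symmetric_method f"
    and "strong_order_preservation f"
  shows "indep_irrelevant_matches f"
  unfolding indep_irrelevant_matches_def
proof (intro allI impI)
  fix A A' :: "'n rmatrix" and i j k l
  assume rA: "ranking_problem A" and rA': "ranking_problem A'" and d: "distinct [i, j, k, l]"
    and agree: "\<forall>x y. (x, y) \<noteq> (k, l) \<and> (x, y) \<noteq> (l, k) \<longrightarrow> A x y = A' x y"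
    and ge: "f A j \<le> f A i"
  define P where "P = (\<lambda>x y. (x = k \<and> y = l) \<or> (x = l \<and> y = k))"
  define A0 where "A0 = (\<lambda>x y. if P x y then 0 else A x y)"
  define B where "B = (\<lambda>x y. if P x y then A' x y else 0)"
  define C where "C = (\<lambda>x y. if P x y then A x y else 0)"
  have r0: "ranking_problem A0" unfolding A0_def P_def by (rule rest_rp[OF rA])
  have rB: "ranking_problem B" unfolding B_def P_def by (rule kl_part_rp[OF rA'])
  have rC: "ranking_problem C" unfolding C_def P_def by (rule kl_part_rp[OF rA])
  have eA: "rp_sum A0 C = A" unfolding rp_sum_def A0_def C_def by (auto simp: fun_eq_iff)
  have eA': "rp_sum A0 B = A'" unfolding rp_sum_def A0_def B_def P_def using agree
    by (auto simp: fun_eq_iff)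
  have fB: "f B i = f B j"
    by (rule swap_invariant[OF assms(1) rB d]) (simp add: B_def P_def)
  have fC: "f C i = f C j"
    by (rule swap_invariant[OF assms(1) rC d]) (simp add: C_def P_def)
  have "f A0 j \<le> f A0 i"
  proof (rule ccontr)
    assume "\<not> f A0 j \<le> f A0 i"
    then have "f A0 j > f A0 i" by simp
    then have "f (rp_sum A0 C) j > f (rp_sum A0 C) i"
      using assms(3) r0 rC fC unfolding strong_order_preservation_def by force
    then show False using ge eA by simp
  qed
  then have "f (rp_sum A0 B) j \<le> f (rp_sum A0 B) i"
    using assms(3) r0 rB fB unfolding strong_order_preservation_def by force
  then show "f A' j \<le> f A' i" using eA' by simp
qed

end
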